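(* Let $r=r(n)\ge3$ be an integer with $r=o(n^{1/2})$, and let $m=m(n)$ be a nonnegative integer. Let $t$ and $\alpha$ be integers with $t=O(1)$ and $0\le\alpha\le rt$. If $H$ is chosen uniformly at random from $\mathcal{H}_r(n,m)$, then the expected number of sets of $t$ edges of $H$ whose union has at most $rt-\alpha$ vertices is $O\bigl(t^\alpha r^{2\alpha}m^tn^{-\alpha}\bigr)$ as $n\to\infty$.
   Context: $\mathcal{H}_r(n,m)$ is the set of all $r$-uniform hypergraphs on vertex set $[n]$ with exactly $m$ edges (each edge an $r$-subset of $[n]$). *)

theory Defs
  imports Main "HOL-Library.Landau_Symbols"
begin

definition hypergraphs :: "nat \<Rightarrow> nat \<Rightarrow> nat \<Rightarrow> nat set set set" where
  "hypergraphs r n m =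
     {E. E \<subseteq> {e. e \<subseteq> {1..n} \<and> card e = r} \<and> card E = m}"

definition small_union_count :: "nat set set \<Rightarrow> nat \<Rightarrow> nat \<Rightarrow> nat" where
  "small_union_count H t k = card {S. S \<subseteq> H \<and> card S = t \<and> card (\<Union>S) \<le> k}"

definition uniform_expectation :: "nat \<Rightarrow> nat \<Rightarrow> nat \<Rightarrow> (nat set set \<Rightarrow> real) \<Rightarrow> real" where
  "uniform_expectation r n m f =
     (\<Sum>H\<in>hypergraphs r n m. f H) / real (card (hypergraphs r n m))"

end

theory Submission
  imports Defs Complex_Main
begin


lemma binom_ratio:
  "a \<le> k \<Longrightarrow> k \<le> M \<Longrightarrow> real ((M - a) choose (k - a)) \<le> (real k / real M) ^ a * real (M choose k)"
proof (induction a arbitrary: M k)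
  case 0 then show ?case by simp
next
  case (Suc a)
  then obtain M' k' where M: "M = Suc M'" and k: "k = Suc k'"
    by (metis Suc_le_D le_trans)
  have kM: "k' \<le> M'" "a \<le> k'" using Suc.prems M k by auto
  have IH: "real ((M' - a) choose (k' - a)) \<le> (real k' / real M') ^ a * real (M' choose k')"
    using Suc.IH kM by auto
  have abs: "real (Suc k') * real (Suc M' choose Suc k') = real (Suc M') * real (M' choose k')"
    using Suc_times_binomial[of k' M'] by (metis of_nat_mult)
  have r1: "(real k' / real M') ^ a \<le> (real (Suc k') / real (Suc M')) ^ a"
  proof (cases "M' = 0")
    case True then show ?thesis using kM by simp
  next
    case False
    have "real k' / real M' \<le> real (Suc k') / real (Suc M')"
      using False kM by (simp add: divide_simps algebra_simps)
    then show ?thesis by (intro power_mono) auto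
  qed
  have "real ((M - Suc a) choose (k - Suc a)) = real ((M' - a) choose (k' - a))" using M k by simp
  also have "\<dots> \<le> (real (Suc k') / real (Suc M')) ^ a * real (M' choose k')"
    using IH mult_right_mono[OF r1, of "real (M' choose k')"] by linarith
  also have "real (M' choose k') = (real (Suc k') / real (Suc M')) * real (Suc M' choose Suc k')"
    using abs by (simp add: field_simps)
  finally show ?case using M k by (simp add: mult_ac)
qed



lemma card_supsets_le:
  assumes "finite X" "A \<subseteq> X"
  shows "card {E. E \<subseteq> X \<and> card E = k \<and> A \<subseteq> E} \<le> (card X - card A) choose (k - card A)"
proof -
  have fA: "finite A" using assms finite_subset by blast
  have "card {E. E \<subseteq> X \<and> card E = k \<and> A \<subseteq> E} \<le> card {B. B \<subseteq> X - A \<and> card B = k - card A}"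
  proof (rule card_inj_on_le[where f = "\<lambda>E. E - A"])
    show "inj_on (\<lambda>E. E - A) {E. E \<subseteq> X \<and> card E = k \<and> A \<subseteq> E}"
      by (rule inj_onI) blast
    show "(\<lambda>E. E - A) ` {E. E \<subseteq> X \<and> card E = k \<and> A \<subseteq> E} \<subseteq> {B. B \<subseteq> X - A \<and> card B = k - card A}"
      using fA by (auto simp: card_Diff_subset)
    show "finite {B. B \<subseteq> X - A \<and> card B = k - card A}" using assms by simp
  qed
  also have "\<dots> = (card X - card A) choose (k - card A)"
    using assms by (simp add: n_subsets card_Diff_subset fA)
  finally show ?thesis .
qed

lemma card_supsets_real:
  assumes "finite X" "k \<le> card X" "finite A"
  shows "real (card {E. E \<subseteq> X \<and> card E = k \<and> A \<subseteq> E}) \<le> (real k / real (card X)) ^ card A * real (card X choose k)"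
proof (cases "A \<subseteq> X \<and> card A \<le> k")
  case True
  have "card {E. E \<subseteq> X \<and> card E = k \<and> A \<subseteq> E} \<le> (card X - card A) choose (k - card A)"
    using card_supsets_le[OF assms(1), of A k] True by blast
  then have "real (card {E. E \<subseteq> X \<and> card E = k \<and> A \<subseteq> E}) \<le> real ((card X - card A) choose (k - card A))"
    by linarith
  also have "\<dots> \<le> (real k / real (card X)) ^ card A * real (card X choose k)"
    using binom_ratio[of "card A" k "card X"] True assms by blast
  finally show ?thesis .
next
  case False
  then have e: "{E. E \<subseteq> X \<and> card E = k \<and> A \<subseteq> E} = {}"
    using assms by (auto dest: card_mono[OF finite_subset])
  show ?thesis unfolding e by simp
qed

lemma sum_Pow_power:
  fixes y :: real
  assumes "finite B"
  shows "(\<Sum>A\<in>Pow B. y ^ card A) = (1 + y) ^ card B"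
  using assms
proof (induction B rule: finite_induct)
  case empty then show ?case by simp
next
  case (insert x B)
  have Pw: "Pow (insert x B) = Pow B \<union> insert x ` Pow B" by (rule Pow_insert)
  have disj: "Pow B \<inter> insert x ` Pow B = {}" using insert by auto
  have inj: "inj_on (insert x) (Pow B)" using insert by (auto simp: inj_on_def)
  have c: "\<And>A. A \<in> Pow B \<Longrightarrow> card (insert x A) = Suc (card A)"
  proof -
    fix A assume "A \<in> Pow B"
    then have "finite A" "x \<notin> A" using insert finite_subset by auto
    then show "card (insert x A) = Suc (card A)" by simp
  qed
  have "(\<Sum>A\<in>Pow (insert x B). y ^ card A) = (\<Sum>A\<in>Pow B. y ^ card A) + (\<Sum>A\<in>insert x ` Pow B. y ^ card A)"
    unfolding Pw using insert disj by (intro sum.union_disjoint) auto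
  also have "(\<Sum>A\<in>insert x ` Pow B. y ^ card A) = (\<Sum>A\<in>Pow B. y ^ card (insert x A))"
    using inj by (simp add: sum.reindex)
  also have "\<dots> = y * (\<Sum>A\<in>Pow B. y ^ card A)"
    by (simp add: c sum_distrib_left)
  finally show ?case using insert by (simp add: algebra_simps)
qed



lemma inner_bound:
  fixes z :: real
  assumes z1: "z \<ge> 1" and fV: "finite V" and rn: "r \<le> n" and n0: "n > 0"
    and small: "z * real r * real (card V) \<le> real n"
  shows "(\<Sum>e\<in>{e. e \<subseteq> {1..n} \<and> card e = r}. z ^ card (V \<inter> e)) \<le> exp 1 * real (n choose r)"
proof -
  define R where "R = {e. e \<subseteq> {1..n} \<and> card e = r}"
  have fR: "finite R" unfolding R_def by (rule finite_subset[of _ "Pow {1..n}"]) auto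
  have "(\<Sum>e\<in>R. z ^ card (V \<inter> e)) = (\<Sum>e\<in>R. \<Sum>A\<in>Pow (V \<inter> e). (z - 1) ^ card A)"
    using sum_Pow_power[of "V \<inter> _" "z - 1"] fV by simp
  also have "\<dots> = (\<Sum>e\<in>R. \<Sum>A\<in>Pow V. if A \<subseteq> e then (z - 1) ^ card A else 0)"
  proof (rule sum.cong[OF refl])
    fix e
    have "Pow (V \<inter> e) = Pow V \<inter> {A. A \<subseteq> e}" by auto
    then show "(\<Sum>A\<in>Pow (V \<inter> e). (z - 1) ^ card A) = (\<Sum>A\<in>Pow V. if A \<subseteq> e then (z - 1) ^ card A else 0)"
      using fV by (simp add: sum.inter_restrict)
  qed
  also have "\<dots> = (\<Sum>A\<in>Pow V. \<Sum>e\<in>R. if A \<subseteq> e then (z - 1) ^ card A else 0)"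
    by (rule sum.swap)
  also have "\<dots> = (\<Sum>A\<in>Pow V. (z - 1) ^ card A * real (card {E. E \<subseteq> {1..n} \<and> card E = r \<and> A \<subseteq> E}))"
  proof (rule sum.cong[OF refl])
    fix A
    have "(\<Sum>e\<in>R. if A \<subseteq> e then (z - 1) ^ card A else 0) = (\<Sum>e\<in>{e\<in>R. A \<subseteq> e}. (z - 1) ^ card A)"
      using fR by (simp add: sum.inter_filter[symmetric])
    also have "{e\<in>R. A \<subseteq> e} = {E. E \<subseteq> {1..n} \<and> card E = r \<and> A \<subseteq> E}" unfolding R_def by auto
    finally show "(\<Sum>e\<in>R. if A \<subseteq> e then (z - 1) ^ card A else 0) = (z - 1) ^ card A * real (card {E. E \<subseteq> {1..n} \<and> card E = r \<and> A \<subseteq> E})"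
      by (simp add: mult.commute)
  qed
  also have "\<dots> \<le> (\<Sum>A\<in>Pow V. (z - 1) ^ card A * ((real r / real n) ^ card A * real (n choose r)))"
  proof (rule sum_mono)
    fix A assume "A \<in> Pow V"
    then have "finite A" using fV finite_subset by auto
    then have "real (card {E. E \<subseteq> {1..n} \<and> card E = r \<and> A \<subseteq> E}) \<le> (real r / real n) ^ card A * real (n choose r)"
      using card_supsets_real[of "{1..n}" r A] rn by simp
    then show "(z - 1) ^ card A * real (card {E. E \<subseteq> {1..n} \<and> card E = r \<and> A \<subseteq> E}) \<le> (z - 1) ^ card A * ((real r / real n) ^ card A * real (n choose r))"
      using z1 by (intro mult_left_mono) auto
  qed
  also have "\<dots> = real (n choose r) * (\<Sum>A\<in>Pow V. ((z - 1) * (real r / real n)) ^ card A)"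
    unfolding sum_distrib_left by (intro sum.cong refl) (simp add: power_mult_distrib[symmetric] times_divide_eq_right)
  also have "\<dots> = real (n choose r) * (1 + (z - 1) * (real r / real n)) ^ card V"
    using sum_Pow_power[OF fV] by simp
  also have "\<dots> \<le> real (n choose r) * exp ((z - 1) * (real r / real n)) ^ card V"
    using z1 by (intro mult_left_mono power_mono) (auto simp: add_increasing)
  also have "exp ((z - 1) * (real r / real n)) ^ card V = exp (real (card V) * ((z - 1) * (real r / real n)))"
    by (rule exp_of_nat_mult[symmetric])
  also have "real (n choose r) * exp (real (card V) * ((z - 1) * (real r / real n))) \<le> real (n choose r) * exp 1"
  proof -
    have "real (card V) * ((z - 1) * (real r / real n)) \<le> real (card V) * (z * (real r / real n))"
      by (intro mult_left_mono) (auto simp: divide_simps algebra_simps)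
    also have "\<dots> = z * real r * real (card V) / real n" by simp
    also have "\<dots> \<le> 1" using small n0 by (simp add: divide_simps)
    finally have "real (card V) * ((z - 1) * (real r / real n)) \<le> 1" .
    then show ?thesis by (intro mult_left_mono) auto
  qed
  finally show ?thesis unfolding R_def by (simp add: mult.commute)
qed



lemma card_Union_list:
  fixes n :: nat
  assumes "set ys \<subseteq> {e. e \<subseteq> {1..n} \<and> card e = r}"
  shows "card (\<Union>(set ys)) \<le> r * length ys \<and> finite (\<Union>(set ys))"
  using assms
proof (induction ys)
  case Nil then show ?case by simp
next
  case (Cons y ys)
  have yy: "y \<subseteq> {1..n}" "card y = r" using Cons.prems by auto
  have fy: "finite y" "card y = r" using yy by (auto intro: finite_subset[OF yy(1)])
  have "card (y \<union> \<Union>(set ys)) \<le> card y + card (\<Union>(set ys))" by (rule card_Un_le)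
  then show ?case using Cons fy by auto
qed

lemma list_bound:
  fixes z :: real
  assumes z1: "z \<ge> 1" and rn: "r \<le> n" and n0: "n > 0"
    and small: "z * real r * real (r * T) \<le> real n"
  shows "finite V \<Longrightarrow> card V + r * t \<le> r * T \<Longrightarrow>
    (\<Sum>xs\<in>{xs. set xs \<subseteq> {e. e \<subseteq> {1..n} \<and> card e = r} \<and> length xs = t}.
       z ^ (card V + r * t - card (V \<union> \<Union>(set xs)))) \<le> (exp 1 * real (n choose r)) ^ t"
proof (induction t arbitrary: V)
  case 0
  have "{xs. set xs \<subseteq> {e. e \<subseteq> {1..n} \<and> card e = r} \<and> length xs = 0} = {[]}" by auto
  then show ?case by simp
next
  case (Suc t)
  define R where "R = {e. e \<subseteq> {1..n} \<and> card e = r}"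
  define Ls where "Ls = {xs. set xs \<subseteq> R \<and> length xs = t}"
  have fR: "finite R" unfolding R_def by (rule finite_subset[of _ "Pow {1..n}"]) auto
  have fLs: "finite Ls" unfolding Ls_def using fR by (rule finite_lists_length_eq)
  define f where "f xs = z ^ (card V + r * Suc t - card (V \<union> \<Union>(set xs)))" for xs
  have "(\<Sum>xs\<in>{xs. set xs \<subseteq> R \<and> length xs = Suc t}. f xs) = (\<Sum>p\<in>Ls \<times> R. f (snd p # fst p))"
    unfolding lists_length_Suc_eq Ls_def
    by (subst sum.reindex[OF inj_split_Cons]) (simp add: case_prod_beta)
  also have "\<dots> = (\<Sum>ys\<in>Ls. \<Sum>e\<in>R. f (e # ys))"
    by (simp add: sum.cartesian_product case_prod_beta)
  also have "\<dots> = (\<Sum>e\<in>R. \<Sum>ys\<in>Ls. f (e # ys))"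
    by (rule sum.swap)
  also have "\<dots> = (\<Sum>e\<in>R. z ^ card (V \<inter> e) * (\<Sum>ys\<in>Ls. z ^ (card (V \<union> e) + r * t - card ((V \<union> e) \<union> \<Union>(set ys)))))"
  proof (rule sum.cong[OF refl])
    fix e assume e: "e \<in> R"
    then have fe: "finite e" "card e = r" unfolding R_def by (auto intro: finite_subset)
    show "(\<Sum>ys\<in>Ls. f (e # ys)) = z ^ card (V \<inter> e) * (\<Sum>ys\<in>Ls. z ^ (card (V \<union> e) + r * t - card ((V \<union> e) \<union> \<Union>(set ys))))"
      unfolding sum_distrib_left
    proof (rule sum.cong[OF refl])
      fix ys assume ys: "ys \<in> Ls"
      have U: "card (\<Union>(set ys)) \<le> r * t" "finite (\<Union>(set ys))"
        using card_Union_list[of ys n r] ys unfolding Ls_def R_def by auto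
      have ci: "card V + r = card (V \<union> e) + card (V \<inter> e)"
        using card_Un_Int[OF Suc.prems(1) fe(1)] fe by simp
      have c1: "card (V \<union> e) \<le> card (V \<union> e \<union> \<Union>(set ys))"
        using Suc.prems(1) fe U by (intro card_mono) auto
      have c2: "card (V \<union> e \<union> \<Union>(set ys)) \<le> card (V \<union> e) + r * t"
        using card_Un_le[of "V \<union> e" "\<Union>(set ys)"] U by linarith
      have "card V + r * Suc t - card (V \<union> \<Union>(set (e # ys))) =
            card (V \<inter> e) + (card (V \<union> e) + r * t - card (V \<union> e \<union> \<Union>(set ys)))"
        using ci c1 c2 by (simp add: Un_assoc)
      then show "f (e # ys) = z ^ card (V \<inter> e) * z ^ (card (V \<union> e) + r * t - card ((V \<union> e) \<union> \<Union>(set ys)))"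
        unfolding f_def by (simp add: power_add)
    qed
  qed
  also have "\<dots> \<le> (\<Sum>e\<in>R. z ^ card (V \<inter> e) * (exp 1 * real (n choose r)) ^ t)"
  proof (rule sum_mono)
    fix e assume e: "e \<in> R"
    then have fe: "finite e" "card e = r" unfolding R_def by (auto intro: finite_subset)
    have "card (V \<union> e) + r * t \<le> r * T"
      using card_Un_le[of V e] fe Suc.prems(2) by simp
    then have "(\<Sum>ys\<in>Ls. z ^ (card (V \<union> e) + r * t - card ((V \<union> e) \<union> \<Union>(set ys)))) \<le> (exp 1 * real (n choose r)) ^ t"
      using Suc.IH[of "V \<union> e"] Suc.prems(1) fe unfolding Ls_def R_def by auto
    then show "z ^ card (V \<inter> e) * (\<Sum>ys\<in>Ls. z ^ (card (V \<union> e) + r * t - card ((V \<union> e) \<union> \<Union>(set ys)))) \<le> z ^ card (V \<inter> e) * (exp 1 * real (n choose r)) ^ t"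
      using z1 by (intro mult_left_mono) auto
  qed
  also have "\<dots> = (\<Sum>e\<in>R. z ^ card (V \<inter> e)) * (exp 1 * real (n choose r)) ^ t"
    by (simp add: sum_distrib_right)
  also have "\<dots> \<le> (exp 1 * real (n choose r)) * (exp 1 * real (n choose r)) ^ t"
  proof (rule mult_right_mono)
    have "z * real r * real (card V) \<le> z * real r * real (r * T)"
    proof (intro mult_left_mono)
      show "real (card V) \<le> real (r * T)" using Suc.prems(2) by linarith
    qed (use z1 in auto)
    then show "(\<Sum>e\<in>R. z ^ card (V \<inter> e)) \<le> exp 1 * real (n choose r)"
      unfolding R_def using inner_bound[OF z1 Suc.prems(1) rn n0] small by linarith
  qed simp
  finally show ?case unfolding f_def R_def by simp
qed



lemma expect_le:
  fixes n r m t k :: nat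
  defines "R \<equiv> {e. e \<subseteq> {1..n} \<and> card e = r}"
  defines "Good \<equiv> {S. S \<subseteq> R \<and> card S = t \<and> card (\<Union>S) \<le> k}"
  assumes rn: "r \<le> n"
  shows "uniform_expectation r n m (\<lambda>H. real (small_union_count H t k))
    \<le> real (card Good) * (real m / real (n choose r)) ^ t"
proof -
  have fR: "finite R" unfolding R_def by (rule finite_subset[of _ "Pow {1..n}"]) auto
  have cR: "card R = n choose r" unfolding R_def using n_subsets[of "{1..n}" r] by simp
  have fG: "finite Good" unfolding Good_def by (rule finite_subset[of _ "Pow R"]) (use fR in auto)
  have Hyp: "hypergraphs r n m = {E. E \<subseteq> R \<and> card E = m}" unfolding hypergraphs_def R_def by simp
  have cH: "card (hypergraphs r n m) = card R choose m" unfolding Hyp using n_subsets[OF fR] by simp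
  have fH: "finite (hypergraphs r n m)" unfolding Hyp by (rule finite_subset[of _ "Pow R"]) (use fR in auto)
  have rhs0: "0 \<le> real (card Good) * (real m / real (n choose r)) ^ t" by simp
  show ?thesis
  proof (cases "m \<le> card R")
    case False
    then have "card (hypergraphs r n m) = 0" using cH by simp
    then show ?thesis unfolding uniform_expectation_def using rhs0 by simp
  next
    case True
    have pos: "real (card R choose m) > 0" using True by simp
    have "(\<Sum>H\<in>hypergraphs r n m. real (small_union_count H t k))
        = (\<Sum>H\<in>hypergraphs r n m. \<Sum>S\<in>Good. if S \<subseteq> H then 1 else 0)"
    proof (rule sum.cong[OF refl])
      fix H assume "H \<in> hypergraphs r n m"
      then have HR: "H \<subseteq> R" unfolding Hyp by auto
      have "{S. S \<subseteq> H \<and> card S = t \<and> card (\<Union>S) \<le> k} = {S\<in>Good. S \<subseteq> H}"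
        unfolding Good_def using HR by auto
      then have "small_union_count H t k = card {S\<in>Good. S \<subseteq> H}"
        unfolding small_union_count_def by simp
      also have "real (card {S\<in>Good. S \<subseteq> H}) = (\<Sum>S\<in>Good. if S \<subseteq> H then 1 else 0)"
        using fG by (simp add: sum.If_cases Int_def)
      finally show "real (small_union_count H t k) = (\<Sum>S\<in>Good. if S \<subseteq> H then 1 else 0)"
        by simp
    qed
    also have "\<dots> = (\<Sum>S\<in>Good. \<Sum>H\<in>hypergraphs r n m. if S \<subseteq> H then 1 else 0)"
      by (rule sum.swap)
    also have "\<dots> \<le> (\<Sum>S\<in>Good. (real m / real (card R)) ^ t * real (card R choose m))"
    proof (rule sum_mono)
      fix S assume S: "S \<in> Good"
      then have fS: "finite S" "card S = t" unfolding Good_def using fR finite_subset by auto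
      have "(\<Sum>H\<in>hypergraphs r n m. if S \<subseteq> H then 1 else 0 :: real) = real (card {H\<in>hypergraphs r n m. S \<subseteq> H})"
        using fH by (simp add: sum.If_cases Int_def)
      also have "{H\<in>hypergraphs r n m. S \<subseteq> H} = {E. E \<subseteq> R \<and> card E = m \<and> S \<subseteq> E}"
        unfolding Hyp by auto
      also have "real (card \<dots>) \<le> (real m / real (card R)) ^ card S * real (card R choose m)"
        using card_supsets_real[OF fR True fS(1)] .
      finally show "(\<Sum>H\<in>hypergraphs r n m. if S \<subseteq> H then 1 else 0) \<le> (real m / real (card R)) ^ t * real (card R choose m)"
        using fS by simp
    qed
    also have "\<dots> = real (card Good) * (real m / real (card R)) ^ t * real (card R choose m)"
      by simp
    finally have "(\<Sum>H\<in>hypergraphs r n m. real (small_union_count H t k)) \<le> real (card Good) * (real m / real (card R)) ^ t * real (card R choose m)" .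
    then show ?thesis unfolding uniform_expectation_def cH using pos cR
      by (simp add: divide_simps)
  qed
qed



lemma main_bound:
  fixes n r m t \<alpha> :: nat
  assumes r1: "r \<ge> 1" and rT: "r ^ 2 * max t 1 \<le> n" and al: "\<alpha> \<le> r * t"
  shows "uniform_expectation r n m (\<lambda>H. real (small_union_count H t (r * t - \<alpha>)))
    \<le> exp (real t) * (real t ^ \<alpha> * real r ^ (2 * \<alpha>) * real m ^ t / real n ^ \<alpha>)"
proof -
  define T where "T = max t 1"
  define R where "R = {e. e \<subseteq> {1..n} \<and> card e = (r::nat)}"
  define Good where "Good = {S. S \<subseteq> R \<and> card S = t \<and> card (\<Union>S) \<le> r * t - \<alpha>}"
  define Ls where "Ls = {xs. set xs \<subseteq> R \<and> length xs = t}"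
  define L where "L = {xs\<in>Ls. card (\<Union>(set xs)) \<le> r * t - \<alpha>}"
  define N where "N = n choose r"
  have T1: "T \<ge> 1" unfolding T_def by simp
  have rr: "r \<le> r ^ 2" using r1 by (simp add: power2_eq_square)
  have "r^2 * 1 \<le> r^2 * T" by (rule mult_le_mono2[OF T1])
  then have rn: "r \<le> n" using rT rr unfolding T_def[symmetric] by linarith
  have n0: "n > 0" using rn r1 by simp
  have N0: "real N > 0" unfolding N_def using rn by simp
  have fR: "finite R" unfolding R_def by (rule finite_subset[of _ "Pow {1..n}"]) auto
  have fLs: "finite Ls" unfolding Ls_def using fR by (rule finite_lists_length_eq)
  define z where "z = real n / (real r ^ 2 * real T)"
  have den: "real r ^ 2 * real T > 0" using r1 T1 by simp
  have z1: "z \<ge> 1" unfolding z_def using rT den unfolding T_def[symmetric]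
    by (simp add: divide_simps) (metis of_nat_le_iff of_nat_mult of_nat_power)
  have small: "z * real r * real (r * T) \<le> real n"
    unfolding z_def using den by (simp add: divide_simps power2_eq_square)
  have a: "card Good \<le> card L"
  proof -
    define g where "g S = (SOME xs. set xs = S \<and> distinct xs)" for S :: "nat set set"
    have g: "set (g S) = S \<and> distinct (g S)" if "finite S" for S
      unfolding g_def using finite_distinct_list[OF that] by (rule someI_ex)
    show ?thesis
    proof (rule card_inj_on_le[where f = g])
      show "inj_on g Good"
      proof (rule inj_onI)
        fix S S' assume "S \<in> Good" "S' \<in> Good" "g S = g S'"
        moreover have "finite S" "finite S'" using \<open>S \<in> Good\<close> \<open>S' \<in> Good\<close> fR finite_subset
          unfolding Good_def by auto
        ultimately show "S = S'" using g by metis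
      qed
      show "g ` Good \<subseteq> L"
      proof
        fix xs assume "xs \<in> g ` Good"
        then obtain S where S: "S \<in> Good" and xs: "xs = g S" by auto
        have fS: "finite S" using S fR finite_subset unfolding Good_def by auto
        have "set xs = S" "distinct xs" using g[OF fS] xs by auto
        then have "length xs = card S" using distinct_card by fastforce
        then show "xs \<in> L" using S \<open>set xs = S\<close> unfolding L_def Ls_def Good_def by auto
      qed
      show "finite L" unfolding L_def using fLs by simp
    qed
  qed
  have b: "real (card L) * z ^ \<alpha> \<le> (exp 1 * real N) ^ t"
  proof -
    have "real (card L) * z ^ \<alpha> = (\<Sum>xs\<in>L. z ^ \<alpha>)" by simp
    also have "\<dots> \<le> (\<Sum>xs\<in>L. z ^ (r * t - card (\<Union>(set xs))))"
    proof (rule sum_mono)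
      fix xs assume "xs \<in> L"
      then have "\<alpha> \<le> r * t - card (\<Union>(set xs))" unfolding L_def using al by auto
      then show "z ^ \<alpha> \<le> z ^ (r * t - card (\<Union>(set xs)))" using z1 by (rule power_increasing)
    qed
    also have "\<dots> \<le> (\<Sum>xs\<in>Ls. z ^ (r * t - card (\<Union>(set xs))))"
      using fLs z1 by (intro sum_mono2) (auto simp: L_def)
    also have "\<dots> = (\<Sum>xs\<in>Ls. z ^ (card ({}::nat set) + r * t - card ({} \<union> \<Union>(set xs))))" by simp
    also have "\<dots> \<le> (exp 1 * real N) ^ t"
      unfolding Ls_def R_def N_def
      by (rule list_bound[OF z1 rn n0 small]) (auto simp: T_def)
    finally show ?thesis .
  qed
  have c: "uniform_expectation r n m (\<lambda>H. real (small_union_count H t (r * t - \<alpha>)))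
    \<le> real (card Good) * (real m / real N) ^ t"
    unfolding Good_def R_def N_def by (rule expect_le[OF rn])
  have zp: "z ^ \<alpha> > 0" using z1 by simp
  have "real (card Good) * (real m / real N) ^ t \<le> real (card L) * (real m / real N) ^ t"
    using a by (intro mult_right_mono) auto
  also have "\<dots> \<le> (exp 1 * real N) ^ t / z ^ \<alpha> * (real m / real N) ^ t"
    using b zp by (intro mult_right_mono) (auto simp: divide_simps)
  also have "\<dots> = exp 1 ^ t * real m ^ t * (1 / z ^ \<alpha>)"
    using N0 by (simp add: power_mult_distrib power_divide field_simps)
  also have "exp 1 ^ t = exp (real t)" by (simp add: exp_of_nat_mult[symmetric])
  also have "1 / z ^ \<alpha> = real T ^ \<alpha> * real r ^ (2 * \<alpha>) / real n ^ \<alpha>"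
    unfolding z_def using n0 den by (simp add: power_divide power_mult_distrib field_simps flip: power_mult)
  also have "real T ^ \<alpha> = real t ^ \<alpha>"
  proof (cases "t = 0")
    case True then have "\<alpha> = 0" using al by simp
    then show ?thesis by simp
  qed (simp add: T_def)
  finally show ?thesis using c by (simp add: field_simps)
qed



theorem lemma2p2:
  fixes r m t \<alpha> :: "nat \<Rightarrow> nat"
  assumes r_ge: "\<And>n. r n \<ge> 3"
    and r_small: "(\<lambda>n. real (r n)) \<in> o(\<lambda>n. sqrt (real n))"
    and t_bdd: "(\<lambda>n. real (t n)) \<in> O(\<lambda>_. 1)"
    and alpha_le: "\<And>n. \<alpha> n \<le> r n * t n"
  shows "(\<lambda>n. uniform_expectation (r n) n (m n)
            (\<lambda>H. real (small_union_count H (t n) (r n * t n - \<alpha> n))))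
         \<in> O(\<lambda>n. real (t n) ^ \<alpha> n * real (r n) ^ (2 * \<alpha> n) * real (m n) ^ t n
                 / real n ^ \<alpha> n)"
proof -
  obtain K where K0: "K > 0" and evK: "eventually (\<lambda>n. norm (real (t n)) \<le> K * norm (1::real)) at_top"
    using t_bdd by (elim landau_o.bigE)
  define c where "c = 1 / sqrt (K + 1)"
  have c0: "c > 0" unfolding c_def using K0 by simp
  have c2: "c ^ 2 = 1 / (K + 1)" unfolding c_def using K0 by (simp add: power_divide)
  have evr: "eventually (\<lambda>n. norm (real (r n)) \<le> c * norm (sqrt (real n))) at_top"
    using landau_o.smallD[OF r_small c0] .
  show ?thesis
  proof (rule landau_o.bigI[of "exp K"])
    show "exp K > 0" by simp
    show "eventually (\<lambda>n. norm (uniform_expectation (r n) n (m n)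
            (\<lambda>H. real (small_union_count H (t n) (r n * t n - \<alpha> n))))
         \<le> exp K * norm (real (t n) ^ \<alpha> n * real (r n) ^ (2 * \<alpha> n) * real (m n) ^ t n
                 / real n ^ \<alpha> n)) at_top"
      using evK evr
    proof eventually_elim
      case (elim n)
      have tK: "real (t n) \<le> K" using elim(1) by simp
      have rc: "real (r n) \<le> c * sqrt (real n)" using elim(2) by simp
      have "real (r n) ^ 2 \<le> (c * sqrt (real n)) ^ 2"
        using rc by (intro power_mono) auto
      also have "\<dots> = real n / (K + 1)" using c2 by (simp add: power_mult_distrib)
      finally have r2: "real (r n) ^ 2 \<le> real n / (K + 1)" .
      have mt: "real (max (t n) 1) \<le> K + 1" using tK K0 by (simp add: max_def)
      have "real (r n ^ 2 * max (t n) 1) = real (r n) ^ 2 * real (max (t n) 1)" by simp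
      also have "\<dots> \<le> real n / (K + 1) * (K + 1)"
        using r2 mt by (intro mult_mono) auto
      also have "\<dots> = real n" using K0 by simp
      finally have rT: "r n ^ 2 * max (t n) 1 \<le> n" by linarith
      have r1: "r n \<ge> 1" using r_ge[of n] by simp
      define E where "E = uniform_expectation (r n) n (m n)
            (\<lambda>H. real (small_union_count H (t n) (r n * t n - \<alpha> n)))"
      define B where "B = real (t n) ^ \<alpha> n * real (r n) ^ (2 * \<alpha> n) * real (m n) ^ t n / real n ^ \<alpha> n"
      have E0: "E \<ge> 0" unfolding E_def uniform_expectation_def by (intro divide_nonneg_nonneg sum_nonneg) auto
      have B0: "B \<ge> 0" unfolding B_def by simp
      have "E \<le> exp (real (t n)) * B"
        unfolding E_def B_def by (rule main_bound[OF r1 rT alpha_le])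
      also have "\<dots> \<le> exp K * B" using tK B0 by (intro mult_right_mono) auto
      finally show ?case using E0 B0 unfolding E_def B_def by simp
    qed
  qed
qed

end
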